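(* Let $(X,\|\cdot\|_X)$ be a Banach space, $\mathcal{K}\subset X$ compact, and $\gamma_n=C'n^\delta\lambda^n$ with fixed $\delta\in\mathbb{R}$, $\lambda>1$, $C'>0$. (i) If for some constants $c_1>0$, $\alpha>0$, $\beta\in\mathbb{R}$ we have $\varepsilon_n(\mathcal{K})_X>c_1\frac{(\log_2n)^\beta}{n^\alpha}$ for all $n\ge2$, then there exists $C>0$ such that $d_n^{\gamma_n}(\mathcal{K})_X\ge C\frac{(\log_2n)^\beta}{n^{2\alpha}}$ for all $n\ge2$. (ii) If for some constants $c_1>0$, $\alpha>0$ we have $\varepsilon_n(\mathcal{K})_X>c_1(\log_2n)^{-\alpha}$ for all $n\ge2$, then there exists $C>0$ such that $d_n^{\gamma_n}(\mathcal{K})_X\ge C(\log_2n)^{-\alpha}$ for all $n\ge2$.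
   Context: For $m\ge0$, the entropy number $\varepsilon_m(\mathcal{K})_X$ is the infimum of all $\varepsilon>0$ such that $\mathcal{K}$ is covered by $2^m$ closed balls of radius $\varepsilon$ with centers in $X$. For $k\ge1$ and a norm $\|\cdot\|_{Y_k}$ on $\mathbb{R}^k$ let $B_{Y_k}=\{y\in\mathbb{R}^k:\|y\|_{Y_k}\le1\}$; for $\gamma\ge0$, $d^\gamma(\mathcal{K},Y_k)_X=\inf_{\Phi}\sup_{f\in\mathcal{K}}\inf_{y\in B_{Y_k}}\|f-\Phi(y)\|_X$, the infimum over all maps $\Phi:B_{Y_k}\to X$ with $\|\Phi(y)-\Phi(y')\|_X\le\gamma\|y-y'\|_{Y_k}$; and the Lipschitz width is $d_n^\gamma(\mathcal{K})_X=\inf_{1\le k\le n}\inf_{\|\cdot\|_{Y_k}}d^\gamma(\mathcal{K},Y_k)_X$, the inner infimum over all norms on $\mathbb{R}^k$. *)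

theory Defs
  imports "HOL-Analysis.Analysis"
begin

text \<open>Entropy number: infimum of all eps > 0 such that K is covered by 2^m closed
  balls of radius eps with centres in X (the ambient space, here the type 'a).
  "Covered by 2^m balls" is rendered as covered by at most 2^m balls
  (balls may repeat).\<close>
definition entropy_number :: "'a::real_normed_vector set \<Rightarrow> nat \<Rightarrow> real" where
  "entropy_number K m = Inf {eps. eps > 0 \<and>
      (\<exists>C. finite C \<and> card C \<le> 2 ^ m \<and> K \<subseteq> (\<Union>c\<in>C. cball c eps))}"

text \<open>R^k is represented as the functions nat => real vanishing outside {..<k}.\<close>
definition Rk :: "nat \<Rightarrow> (nat \<Rightarrow> real) set" where
  "Rk k = {y. \<forall>i\<ge>k. y i = 0}"

definition is_norm_on :: "nat \<Rightarrow> ((nat \<Rightarrow> real) \<Rightarrow> real) \<Rightarrow> bool" where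
  "is_norm_on k N \<longleftrightarrow>
     (\<forall>y\<in>Rk k. 0 \<le> N y \<and> (N y = 0 \<longleftrightarrow> y = (\<lambda>_. 0))) \<and>
     (\<forall>y\<in>Rk k. \<forall>c::real. N (\<lambda>i. c * y i) = \<bar>c\<bar> * N y) \<and>
     (\<forall>y\<in>Rk k. \<forall>z\<in>Rk k. N (\<lambda>i. y i + z i) \<le> N y + N z)"

definition unit_ball :: "nat \<Rightarrow> ((nat \<Rightarrow> real) \<Rightarrow> real) \<Rightarrow> (nat \<Rightarrow> real) set" where
  "unit_ball k N = {y \<in> Rk k. N y \<le> 1}"

text \<open>Phi : B_{Y_k} -> X is gamma-Lipschitz (only its values on the ball matter).\<close>
definition lip_map :: "real \<Rightarrow> nat \<Rightarrow> ((nat \<Rightarrow> real) \<Rightarrow> real) \<Rightarrow> ((nat \<Rightarrow> real) \<Rightarrow> 'a::real_normed_vector) \<Rightarrow> bool" where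
  "lip_map \<gamma> k N \<Phi> \<longleftrightarrow>
     (\<forall>y\<in>unit_ball k N. \<forall>y'\<in>unit_ball k N.
        norm (\<Phi> y - \<Phi> y') \<le> \<gamma> * N (\<lambda>i. y i - y' i))"

definition lip_dist :: "'a::real_normed_vector set \<Rightarrow> real \<Rightarrow> nat \<Rightarrow> ((nat \<Rightarrow> real) \<Rightarrow> real) \<Rightarrow> real" where
  "lip_dist K \<gamma> k N = Inf {(SUP f\<in>K. INF y\<in>unit_ball k N. norm (f - \<Phi> y)) | \<Phi>. lip_map \<gamma> k N \<Phi>}"

definition lipschitz_width :: "'a::real_normed_vector set \<Rightarrow> real \<Rightarrow> nat \<Rightarrow> real" where
  "lipschitz_width K \<gamma> n = Inf {lip_dist K \<gamma> k N | k N. 1 \<le> k \<and> k \<le> n \<and> is_norm_on k N}"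

end

theory Submission imports Defs "Jordan_Normal_Form.Determinant" begin

definition ev :: "nat \<Rightarrow> nat \<Rightarrow> real" where "ev j = (\<lambda>i. if i = j then 1 else 0)"

lemma Rk_ev: "j < k \<Longrightarrow> ev j \<in> Rk k"
  by (auto simp: Rk_def ev_def)

lemma Rk_comb: "(\<And>i. i \<in> A \<Longrightarrow> v i \<in> Rk k) \<Longrightarrow> (\<lambda>j. \<Sum>i\<in>A. c i * v i j) \<in> Rk k"
  by (auto simp: Rk_def)

lemma Rk_zero: "(\<lambda>_. 0) \<in> Rk k" by (auto simp: Rk_def)

lemma N_zero: "is_norm_on k N \<Longrightarrow> N (\<lambda>_. 0) = 0"
  unfolding is_norm_on_def using Rk_zero by blast

lemma N_nonneg: "is_norm_on k N \<Longrightarrow> y \<in> Rk k \<Longrightarrow> 0 \<le> N y"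
  unfolding is_norm_on_def by blast

lemma N_hom: "is_norm_on k N \<Longrightarrow> y \<in> Rk k \<Longrightarrow> N (\<lambda>i. c * y i) = \<bar>c\<bar> * N y"
  unfolding is_norm_on_def by blast

lemma N_tri: "is_norm_on k N \<Longrightarrow> y \<in> Rk k \<Longrightarrow> z \<in> Rk k \<Longrightarrow> N (\<lambda>i. y i + z i) \<le> N y + N z"
  unfolding is_norm_on_def by blast

lemma N_pos: "is_norm_on k N \<Longrightarrow> y \<in> Rk k \<Longrightarrow> y \<noteq> (\<lambda>_. 0) \<Longrightarrow> 0 < N y"
  unfolding is_norm_on_def by (metis order_le_less)

lemma Rk_diff: "y \<in> Rk k \<Longrightarrow> z \<in> Rk k \<Longrightarrow> (\<lambda>i. y i - z i) \<in> Rk k"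
  by (auto simp: Rk_def)

lemma N_sym: assumes "is_norm_on k N" "y \<in> Rk k" "z \<in> Rk k"
  shows "N (\<lambda>i. y i - z i) = N (\<lambda>i. z i - y i)"
proof -
  have "N (\<lambda>i. (-1) * (y i - z i)) = \<bar>-1\<bar> * N (\<lambda>i. y i - z i)"
    by (rule N_hom[OF assms(1) Rk_diff[OF assms(2,3)]])
  then show ?thesis by simp
qed

lemma norm_comb:
  assumes N: "is_norm_on k N" and A: "finite A" and v: "\<And>i. i \<in> A \<Longrightarrow> v i \<in> Rk k"
  shows "N (\<lambda>j. \<Sum>i\<in>A. c i * v i j) \<le> (\<Sum>i\<in>A. \<bar>c i\<bar> * N (v i))"
  using A v
proof (induction A rule: finite_induct)
  case empty
  then show ?case using N_zero[OF N] by simp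
next
  case (insert a A)
  have "N (\<lambda>j. \<Sum>i\<in>insert a A. c i * v i j) = N (\<lambda>j. c a * v a j + (\<Sum>i\<in>A. c i * v i j))"
    using insert by simp
  also have "\<dots> \<le> N (\<lambda>j. c a * v a j) + N (\<lambda>j. \<Sum>i\<in>A. c i * v i j)"
    apply (rule N_tri[OF N])
    using insert.prems Rk_comb[of "{a}" v k c] Rk_comb[of A v k c] by auto
  also have "\<dots> \<le> \<bar>c a\<bar> * N (v a) + (\<Sum>i\<in>A. \<bar>c i\<bar> * N (v i))"
    using N_hom[OF N, of "v a" "c a"] insert by auto
  finally show ?case using insert by simp
qed

lemma Rk_expand: "y \<in> Rk k \<Longrightarrow> (\<lambda>j. \<Sum>i<k. y i * ev i j) = y"
  by (rule ext) (auto simp: ev_def Rk_def if_distrib cong: if_cong)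

lemma N_le_coords: assumes N: "is_norm_on k N" and y: "y \<in> Rk k"
  shows "N y \<le> (\<Sum>i<k. \<bar>y i\<bar> * N (ev i))"
  using norm_comb[OF N, of "{..<k}" ev y] Rk_ev Rk_expand[OF y] by auto

lemma compact_S: "compact {y \<in> Rk k. (\<Sum>j<k. \<bar>y j\<bar>) = 1}"
proof -
  let ?T = "Pi UNIV (\<lambda>i. if i < k then {-1..1} else {0::real})"
  have "compactin (product_topology (\<lambda>i. euclidean) UNIV) (PiE UNIV (\<lambda>i. if i < k then {-1..1} else {0::real}))"
    by (subst compactin_PiE) auto
  then have cT: "compact ?T"
    by (simp add: euclidean_product_topology PiE_UNIV_domain)
  have Rk_eq: "Rk k = {y. \<forall>i. k \<le> i \<longrightarrow> y i = 0}" by (auto simp: Rk_def)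
  have "closed (Rk k)" unfolding Rk_eq
    apply (rule closed_Collect_all, rule closed_Collect_imp)
    by (auto intro!: closed_Collect_eq continuous_intros)
  moreover have "closed {y::nat\<Rightarrow>real. (\<Sum>j<k. \<bar>y j\<bar>) = 1}"
    by (auto intro!: closed_Collect_eq continuous_intros)
  ultimately have cl: "closed {y \<in> Rk k. (\<Sum>j<k. \<bar>y j\<bar>) = 1}"
    by (simp add: Collect_conj_eq closed_Int)
  have sub: "{y \<in> Rk k. (\<Sum>j<k. \<bar>y j\<bar>) = 1} \<subseteq> ?T"
  proof
    fix y assume y: "y \<in> {y \<in> Rk k. (\<Sum>j<k. \<bar>y j\<bar>) = 1}"
    { fix i assume "i < k"
      then have "\<bar>y i\<bar> \<le> (\<Sum>j<k. \<bar>y j\<bar>)"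
        by (intro member_le_sum) auto
      with y have "\<bar>y i\<bar> \<le> 1" by simp }
    with y show "y \<in> ?T" by (auto simp: Rk_def abs_le_iff)
  qed
  have "{y \<in> Rk k. (\<Sum>j<k. \<bar>y j\<bar>) = 1} = ?T \<inter> {y \<in> Rk k. (\<Sum>j<k. \<bar>y j\<bar>) = 1}"
    using sub by blast
  then show ?thesis using compact_Int_closed[OF cT cl] by metis
qed

lemma N_lip: assumes N: "is_norm_on k N" and x: "x \<in> Rk k" and y: "y \<in> Rk k"
  shows "\<bar>N y - N x\<bar> \<le> (\<Sum>i<k. \<bar>y i - x i\<bar> * N (ev i))"
proof -
  have d1: "(\<lambda>i. y i - x i) \<in> Rk k" "(\<lambda>i. x i - y i) \<in> Rk k" using x y by (auto simp: Rk_def)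
  have b: "N (\<lambda>i. y i - x i) \<le> (\<Sum>i<k. \<bar>y i - x i\<bar> * N (ev i))"
    using N_le_coords[OF N d1(1)] by simp
  have "N y = N (\<lambda>i. x i + (y i - x i))" by simp
  also have "\<dots> \<le> N x + N (\<lambda>i. y i - x i)" by (rule N_tri[OF N x d1(1)])
  finally have 1: "N y \<le> N x + N (\<lambda>i. y i - x i)" .
  have "N x = N (\<lambda>i. y i + (x i - y i))" by simp
  also have "\<dots> \<le> N y + N (\<lambda>i. x i - y i)" by (rule N_tri[OF N y d1(2)])
  finally have 2: "N x \<le> N y + N (\<lambda>i. y i - x i)" using N_sym[OF N x y] by simp
  show ?thesis using 1 2 b by linarith
qed

lemma N_cont: assumes N: "is_norm_on k N" and S: "S \<subseteq> Rk k"
  shows "continuous_on S N"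
  unfolding continuous_on_def
proof
  fix x assume xS: "x \<in> S"
  then have x: "x \<in> Rk k" using S by auto
  define g where "g = (\<lambda>y::nat\<Rightarrow>real. \<Sum>i<k. \<bar>y i - x i\<bar> * N (ev i))"
  have gc: "continuous_on UNIV g" unfolding g_def by (intro continuous_intros continuous_on_product_coordinates)
  have gx: "g x = 0" unfolding g_def by simp
  have gt: "(g \<longlongrightarrow> 0) (at x within S)"
    using gc gx by (metis continuous_on_def UNIV_I continuous_on_subset subset_UNIV tendsto_within_subset)
  have ev: "eventually (\<lambda>y. y \<in> S) (at x within S)" by (rule eventually_at_topological[THEN iffD2]) auto
  show "(N \<longlongrightarrow> N x) (at x within S)"
  proof (rule tendsto_sandwich[where f = "\<lambda>y. N x - g y" and h = "\<lambda>y. N x + g y"])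
    show "\<forall>\<^sub>F y in at x within S. N x - g y \<le> N y"
      using ev by eventually_elim (use N_lip[OF N x] S g_def in force)
    show "\<forall>\<^sub>F y in at x within S. N y \<le> N x + g y"
      using ev by eventually_elim (use N_lip[OF N x] S g_def in force)
    show "((\<lambda>y. N x - g y) \<longlongrightarrow> N x) (at x within S)"
      using tendsto_diff[OF tendsto_const gt] by simp
    show "((\<lambda>y. N x + g y) \<longlongrightarrow> N x) (at x within S)"
      using tendsto_add[OF tendsto_const gt] by simp
  qed
qed

lemma ball_bounded: assumes N: "is_norm_on k N"
  shows "\<exists>M. \<forall>y\<in>unit_ball k N. \<forall>j. \<bar>y j\<bar> \<le> M"
proof (cases "k = 0")
  case True
  then show ?thesis by (intro exI[of _ 0]) (auto simp: unit_ball_def Rk_def)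
next
  case False
  define S where "S = {y \<in> Rk k. (\<Sum>j<k. \<bar>y j\<bar>) = 1}"
  have e0: "ev 0 \<in> Rk k" using False Rk_ev by auto
  have "(\<Sum>j<k. \<bar>ev 0 j\<bar>) = 1" using False by (simp add: ev_def)
  then have "ev 0 \<in> S" using e0 by (auto simp: S_def)
  then have Sne: "S \<noteq> {}" by auto
  obtain y0 where y0: "y0 \<in> S" and min: "\<And>y. y \<in> S \<Longrightarrow> N y0 \<le> N y"
    using continuous_attains_inf[OF compact_S[of k, folded S_def] Sne N_cont[OF N]] S_def by auto
  have "y0 \<noteq> (\<lambda>_. 0)" using y0 by (auto simp: S_def)
  then have c: "0 < N y0" using N_pos[OF N] y0 by (auto simp: S_def)
  show ?thesis
  proof (intro exI[of _ "1 / N y0"] ballI allI)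
    fix y j assume yB: "y \<in> unit_ball k N"
    then have y: "y \<in> Rk k" and Ny: "N y \<le> 1" by (auto simp: unit_ball_def)
    define \<sigma> where "\<sigma> = (\<Sum>j<k. \<bar>y j\<bar>)"
    have yj: "\<bar>y j\<bar> \<le> \<sigma>"
    proof (cases "j < k")
      case True then show ?thesis unfolding \<sigma>_def by (intro member_le_sum) auto
    next
      case False then show ?thesis using y unfolding \<sigma>_def by (auto simp: Rk_def intro: sum_nonneg)
    qed
    show "\<bar>y j\<bar> \<le> 1 / N y0"
    proof (cases "\<sigma> = 0")
      case True then show ?thesis using yj c by simp
    next
      case False
      then have sp: "\<sigma> > 0" unfolding \<sigma>_def using sum_nonneg[of "{..<k}" "\<lambda>j. \<bar>y j\<bar>"] by linarith
      define z where "z = (\<lambda>i. (1/\<sigma>) * y i)"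
      have "z \<in> S" using y sp unfolding S_def z_def \<sigma>_def
        by (auto simp: Rk_def abs_mult sum_divide_distrib[symmetric])
      then have "N y0 \<le> N z" by (rule min)
      also have "N z = (1/\<sigma>) * N y" unfolding z_def using N_hom[OF N y, of "1/\<sigma>"] sp by simp
      finally have "\<sigma> * N y0 \<le> N y" using sp by (simp add: field_simps)
      then have "\<sigma> \<le> 1 / N y0" using Ny c by (simp add: field_simps)
      then show ?thesis using yj by linarith
    qed
  qed
qed

definition colmat :: "nat \<Rightarrow> (nat \<Rightarrow> nat \<Rightarrow> real) \<Rightarrow> real Matrix.mat" where
  "colmat k Ys = Matrix.mat k k (\<lambda>(i,j). Ys j i)"

lemma colmat_carrier: "colmat k Ys \<in> carrier_mat k k"
  by (simp add: colmat_def)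

lemma det_bound:
  assumes M: "\<And>j i. j < k \<Longrightarrow> \<bar>Ys j i\<bar> \<le> M"
  shows "\<bar>Determinant.det (colmat k Ys)\<bar> \<le> fact k * M ^ k"
proof -
  let ?P = "{p. p permutes {0..<k}}"
  have "\<bar>Determinant.det (colmat k Ys)\<bar> = \<bar>\<Sum>p\<in>?P. signof p * (\<Prod>i = 0..<k. colmat k Ys $$ (i, p i))\<bar>"
    by (simp add: det_def'[OF colmat_carrier])
  also have "\<dots> \<le> (\<Sum>p\<in>?P. \<bar>signof p * (\<Prod>i = 0..<k. colmat k Ys $$ (i, p i))\<bar>)"
    by (rule sum_abs)
  also have "\<dots> \<le> (\<Sum>p\<in>?P. M ^ k)"
  proof (rule sum_mono)
    fix p assume p: "p \<in> ?P"
    then have pk: "\<And>i. i < k \<Longrightarrow> p i < k"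
      by (metis atLeast0LessThan lessThan_iff mem_Collect_eq permutes_in_image)
    have "\<bar>signof p * (\<Prod>i = 0..<k. colmat k Ys $$ (i, p i))\<bar> = (\<Prod>i = 0..<k. \<bar>Ys (p i) i\<bar>)"
      using pk by (simp add: abs_mult abs_prod colmat_def sign_def)
    also have "\<dots> \<le> (\<Prod>i = 0..<k. M)"
      by (rule prod_mono) (use pk M in auto)
    finally show "\<bar>signof p * (\<Prod>i = 0..<k. colmat k Ys $$ (i, p i))\<bar> \<le> M ^ k" by simp
  qed
  also have "\<dots> = fact k * M ^ k"
    using card_permutations[of "{0..<k}" k] by simp
  finally show ?thesis .
qed

lemma det_diag: "Determinant.det (colmat k (\<lambda>j i. d j * ev j i)) = (\<Prod>j<k. d j)"
proof -
  have ut: "upper_triangular (colmat k (\<lambda>j i. d j * ev j i))"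
    by (auto simp: upper_triangular_def colmat_def ev_def)
  have "Determinant.det (colmat k (\<lambda>j i. d j * ev j i)) = prod_list (diag_mat (colmat k (\<lambda>j i. d j * ev j i)))"
    by (rule det_upper_triangular[OF ut colmat_carrier])
  also have "\<dots> = (\<Prod>j\<in>set [0..<k]. colmat k (\<lambda>j i. d j * ev j i) $$ (j,j))"
    by (simp add: diag_mat_def prod.distinct_set_conv_list[symmetric]) (simp add: colmat_def)
  also have "\<dots> = (\<Prod>j<k. d j)"
    by (rule prod.cong) (auto simp: colmat_def ev_def)
  finally show ?thesis .
qed

lemma auerbach:
  assumes N: "is_norm_on k N" and k: "1 \<le> k"
  shows "\<exists>Ys a. (\<forall>j<k. Ys j \<in> unit_ball k N) \<and>
     (\<forall>y\<in>unit_ball k N. (\<forall>i<k. \<bar>a y i\<bar> \<le> 2) \<and> y = (\<lambda>j. \<Sum>i<k. a y i * Ys i j))"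
proof -
  obtain M where M: "\<And>y j. y \<in> unit_ball k N \<Longrightarrow> \<bar>y j\<bar> \<le> M"
    using ball_bounded[OF N] by blast
  define Dset where "Dset = {\<bar>Determinant.det (colmat k Ys)\<bar> | Ys. \<forall>j<k. Ys j \<in> unit_ball k N}"
  have bdd: "bdd_above Dset"
    unfolding Dset_def bdd_above_def using det_bound M by blast
  define d where "d = (\<lambda>j. 1 / N (ev j))"
  define Ys1 where "Ys1 = (\<lambda>j i. d j * ev j i)"
  have Nev: "j < k \<Longrightarrow> 0 < N (ev j)" for j
    using N_pos[OF N Rk_ev, of j] by (auto simp: ev_def fun_eq_iff)
  have Ys1B: "\<forall>j<k. Ys1 j \<in> unit_ball k N"
  proof (intro allI impI)
    fix j assume j: "j < k"
    have "N (Ys1 j) = \<bar>d j\<bar> * N (ev j)" unfolding Ys1_def by (rule N_hom[OF N Rk_ev[OF j]])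
    also have "\<dots> = 1" using Nev[OF j] by (simp add: d_def)
    finally show "Ys1 j \<in> unit_ball k N" using Rk_ev[OF j]
      by (auto simp: unit_ball_def Ys1_def Rk_def ev_def)
  qed
  have d1: "Determinant.det (colmat k Ys1) \<noteq> 0"
    unfolding Ys1_def det_diag using Nev by (force simp: d_def)
  have d1D: "\<bar>Determinant.det (colmat k Ys1)\<bar> \<in> Dset" using Ys1B unfolding Dset_def by blast
  define D where "D = Sup Dset"
  have "\<bar>Determinant.det (colmat k Ys1)\<bar> \<le> D" unfolding D_def by (rule cSup_upper[OF d1D bdd])
  then have Dpos: "D > 0" using d1 by linarith
  have "D / 2 < Sup Dset" using Dpos D_def by simp
  then obtain x where "x \<in> Dset" "D / 2 < x"
    using less_cSup_iff[of Dset "D/2"] d1D bdd by blast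
  then obtain Ys0 where Ys0B: "\<forall>j<k. Ys0 j \<in> unit_ball k N" and big: "D / 2 < \<bar>Determinant.det (colmat k Ys0)\<bar>"
    unfolding Dset_def by blast
  define Y0 where "Y0 = colmat k Ys0"
  have Y0c: "Y0 \<in> carrier_mat k k" unfolding Y0_def by (rule colmat_carrier)
  have "Determinant.det Y0 \<noteq> 0" using big Dpos unfolding Y0_def by auto
  from det_non_zero_imp_unit[OF Y0c this, of undefined]
  obtain B where Bc: "B \<in> carrier_mat k k" and YB: "Y0 * B = 1\<^sub>m k"
    by (auto simp: Units_def ring_mat_def)
  define a where "a = (\<lambda>y i. vec_index (B *\<^sub>v Matrix.vec k y) i)"
  show ?thesis
  proof (intro exI[of _ Ys0] exI[of _ a] conjI Ys0B ballI)
    fix y assume yB: "y \<in> unit_ball k N"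
    then have y: "y \<in> Rk k" by (simp add: unit_ball_def)
    define xv where "xv = B *\<^sub>v Matrix.vec k y"
    have xvc: "xv \<in> carrier_vec k" using Bc by (simp add: xv_def)
    have Yx: "Y0 *\<^sub>v xv = Matrix.vec k y"
      unfolding xv_def using Bc Y0c YB
      by (metis assoc_mult_mat_vec one_mult_mat_vec vec_carrier)
    show "y = (\<lambda>j. \<Sum>i<k. a y i * Ys0 i j)"
    proof
      fix j
      show "y j = (\<Sum>i<k. a y i * Ys0 i j)"
      proof (cases "j < k")
        case True
        have "y j = vec_index (Y0 *\<^sub>v xv) j" using Yx True by simp
        also have "\<dots> = (\<Sum>i<k. Ys0 i j * vec_index xv i)"
          using True Y0c xvc
          by (simp add: Y0_def colmat_def mult_mat_vec_def scalar_prod_def atLeast0LessThan)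
        also have "\<dots> = (\<Sum>i<k. a y i * Ys0 i j)"
          by (simp add: a_def xv_def mult.commute)
        finally show ?thesis .
      next
        case False
        then show ?thesis using y Ys0B by (auto simp: Rk_def unit_ball_def)
      qed
    qed
    show "\<forall>i<k. \<bar>a y i\<bar> \<le> 2"
    proof (intro allI impI)
      fix i assume i: "i < k"
      have cr: "Determinant.det (replace_col Y0 (Y0 *\<^sub>v xv) i) = vec_index xv i * Determinant.det Y0"
        by (rule cramer_lemma_mat[OF Y0c xvc i])
      have "replace_col Y0 (Y0 *\<^sub>v xv) i = colmat k (Ys0(i := y))"
        unfolding Yx by (rule eq_matI) (auto simp: replace_col_def Y0_def colmat_def)
      moreover have "\<forall>j<k. (Ys0(i := y)) j \<in> unit_ball k N" using Ys0B yB by auto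
      ultimately have "\<bar>Determinant.det (replace_col Y0 (Y0 *\<^sub>v xv) i)\<bar> \<in> Dset"
        unfolding Dset_def by auto
      then have "\<bar>Determinant.det (replace_col Y0 (Y0 *\<^sub>v xv) i)\<bar> \<le> D"
        unfolding D_def by (rule cSup_upper[OF _ bdd])
      then have "\<bar>vec_index xv i\<bar> * \<bar>Determinant.det Y0\<bar> \<le> D" using cr by (simp add: abs_mult)
      also have "\<dots> < 2 * \<bar>Determinant.det Y0\<bar>" using big Y0_def by simp
      finally have "\<bar>vec_index xv i\<bar> < 2" by (simp add: mult_less_cancel_right)
      then show "\<bar>a y i\<bar> \<le> 2" by (simp add: a_def xv_def)
    qed
  qed
qed

lemma floor_eq_close: "\<lfloor>x::real\<rfloor> = \<lfloor>y\<rfloor> \<Longrightarrow> \<bar>x - y\<bar> < 1"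
proof -
  assume e: "\<lfloor>x\<rfloor> = \<lfloor>y\<rfloor>"
  have "of_int \<lfloor>x\<rfloor> \<le> x" "x < of_int \<lfloor>x\<rfloor> + 1" "of_int \<lfloor>y\<rfloor> \<le> y" "y < of_int \<lfloor>y\<rfloor> + 1"
    by linarith+
  moreover have "(of_int \<lfloor>x\<rfloor>::real) = of_int \<lfloor>y\<rfloor>" using e by simp
  ultimately show ?thesis unfolding abs_less_iff by linarith
qed

lemma ball_cover:
  assumes N: "is_norm_on k N" and k: "1 \<le> k" and r: "0 < r"
  shows "\<exists>P. finite P \<and> P \<subseteq> unit_ball k N \<and> real (card P) \<le> (4 * real k / r + 1) ^ k \<and>
           (\<forall>y\<in>unit_ball k N. \<exists>p\<in>P. N (\<lambda>i. y i - p i) \<le> r)"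
proof -
  obtain Ys a where YsB: "\<forall>j<k. Ys j \<in> unit_ball k N"
    and A: "\<And>y. y \<in> unit_ball k N \<Longrightarrow> (\<forall>i<k. \<bar>a y i\<bar> \<le> 2) \<and> y = (\<lambda>j. \<Sum>i<k. a y i * Ys i j)"
    using auerbach[OF N k] by blast
  define h where "h = r / k"
  have h: "0 < h" using r k by (simp add: h_def)
  define B where "B = unit_ball k N"
  define g where "g = (\<lambda>y. restrict (\<lambda>i. \<lfloor>(a y i + 2) / h\<rfloor>) {..<k})"
  define L where "L = \<lfloor>4 / h\<rfloor>"
  have gB: "g ` B \<subseteq> PiE {..<k} (\<lambda>_. {0..L})"
  proof
    fix v assume "v \<in> g ` B"
    then obtain y where y: "y \<in> B" and v: "v = g y" by auto
    have "\<And>i. i < k \<Longrightarrow> 0 \<le> (a y i + 2) / h \<and> (a y i + 2) / h \<le> 4 / h"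
      using conjunct1[OF A[of y]] y h unfolding B_def by (auto simp: divide_right_mono abs_le_iff)
    then show "v \<in> PiE {..<k} (\<lambda>_. {0..L})"
      unfolding v g_def L_def by (auto intro!: floor_mono)
  qed
  have finPi: "finite (PiE {..<k} (\<lambda>_. {0..L}))" by (simp add: finite_PiE)
  have cardPi: "card (PiE {..<k} (\<lambda>_. {0..L})) = (nat (L + 1)) ^ k"
    by (simp add: card_PiE)
  have L0: "0 \<le> L" unfolding L_def using h by simp
  have Lb: "real (nat (L + 1)) \<le> 4 * real k / r + 1"
  proof -
    have "real_of_int L \<le> 4 / h" unfolding L_def by simp
    also have "4 / h = 4 * real k / r" unfolding h_def using r k by simp
    finally show ?thesis using L0 by simp
  qed
  define rep where "rep = (\<lambda>v. SOME y. y \<in> B \<and> g y = v)"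
  define P where "P = rep ` (g ` B)"
  have repP: "rep v \<in> B \<and> g (rep v) = v" if "v \<in> g ` B" for v
  proof -
    from that obtain x where "x \<in> B" "v = g x" by auto
    then have "\<exists>y. y \<in> B \<and> g y = v" by blast
    then show ?thesis unfolding rep_def by (rule someI_ex)
  qed
  have finG: "finite (g ` B)" using finite_subset[OF gB finPi] .
  have "card P \<le> card (g ` B)" unfolding P_def by (rule card_image_le[OF finG])
  also have "\<dots> \<le> (nat (L + 1)) ^ k" using card_mono[OF finPi gB] cardPi by simp
  finally have "real (card P) \<le> real (nat (L + 1)) ^ k" by (metis of_nat_le_iff of_nat_power)
  also have "\<dots> \<le> (4 * real k / r + 1) ^ k" by (rule power_mono[OF Lb]) simp
  finally have cardP: "real (card P) \<le> (4 * real k / r + 1) ^ k" .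
  show ?thesis
  proof (intro exI[of _ P] conjI ballI)
    show "finite P" unfolding P_def using finG by simp
    show "P \<subseteq> unit_ball k N" unfolding P_def using repP B_def by auto
    show "real (card P) \<le> (4 * real k / r + 1) ^ k" by (rule cardP)
    fix y assume yB: "y \<in> unit_ball k N"
    define p where "p = rep (g y)"
    have pP: "p \<in> P" unfolding p_def P_def using yB B_def by auto
    have pB: "p \<in> B" and gp: "g p = g y" using repP[of "g y"] yB B_def unfolding p_def by auto
    have close: "\<bar>a y i - a p i\<bar> \<le> h" if i: "i < k" for i
    proof -
      have "\<lfloor>(a y i + 2) / h\<rfloor> = \<lfloor>(a p i + 2) / h\<rfloor>"
        using fun_cong[OF gp, of i] i by (simp add: g_def)
      then have e: "real_of_int \<lfloor>(a y i + 2) / h\<rfloor> = real_of_int \<lfloor>(a p i + 2) / h\<rfloor>" by simp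
      have 1: "real_of_int \<lfloor>(a y i + 2) / h\<rfloor> * h \<le> a y i + 2"
        by (rule floor_divide_lower[OF h])
      have 2: "a y i + 2 < (real_of_int \<lfloor>(a y i + 2) / h\<rfloor> + 1) * h"
        by (rule floor_divide_upper[OF h])
      have 3: "real_of_int \<lfloor>(a p i + 2) / h\<rfloor> * h \<le> a p i + 2"
        by (rule floor_divide_lower[OF h])
      have 4: "a p i + 2 < (real_of_int \<lfloor>(a p i + 2) / h\<rfloor> + 1) * h"
        by (rule floor_divide_upper[OF h])
      show ?thesis using 1 2 3 4 unfolding e distrib_right abs_le_iff by linarith
    qed
    have ey: "y = (\<lambda>j. \<Sum>i<k. a y i * Ys i j)" using A yB by blast
    have ep: "p = (\<lambda>j. \<Sum>i<k. a p i * Ys i j)" using A pB B_def by blast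
    have "(\<lambda>j. y j - p j) = (\<lambda>j. \<Sum>i<k. (a y i - a p i) * Ys i j)"
      by (rule ext) (simp add: fun_cong[OF ey] fun_cong[OF ep] sum_subtractf left_diff_distrib)
    then have "N (\<lambda>j. y j - p j) \<le> (\<Sum>i<k. \<bar>a y i - a p i\<bar> * N (Ys i))"
      using norm_comb[OF N, of "{..<k}" Ys "\<lambda>i. a y i - a p i"] YsB by (auto simp: unit_ball_def)
    also have "\<dots> \<le> (\<Sum>i<k. h)"
    proof (rule sum_mono)
      fix i assume "i \<in> {..<k}"
      then have "\<bar>a y i - a p i\<bar> \<le> h" "0 \<le> N (Ys i)" "N (Ys i) \<le> 1"
        using close YsB N_nonneg[OF N] by (auto simp: unit_ball_def)
      then show "\<bar>a y i - a p i\<bar> * N (Ys i) \<le> h"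
        using mult_mono[of "\<bar>a y i - a p i\<bar>" h "N (Ys i)" 1] h by simp
    qed
    also have "\<dots> = r" using k by (simp add: h_def)
    finally show "\<exists>p\<in>P. N (\<lambda>i. y i - p i) \<le> r" using pP by blast
  qed
qed

lemma entropy_le:
  assumes "finite C" "card C \<le> 2 ^ m" "K \<subseteq> (\<Union>c\<in>C. cball c eps)" "eps > 0"
  shows "entropy_number K m \<le> eps"
  unfolding entropy_number_def
  by (rule cInf_lower) (use assms in \<open>auto intro: bdd_belowI[where m = 0]\<close>)

lemma sup_lower:
  fixes K :: "'a::real_normed_vector set" and \<Phi> :: "(nat \<Rightarrow> real) \<Rightarrow> 'a"
  assumes N: "is_norm_on k N" and k1: "1 \<le> k" and kn: "k \<le> n" and g: "\<gamma> > 0"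
    and Kb: "bounded K" and t: "t > 0" and Phi: "lip_map \<gamma> k N \<Phi>"
    and m: "(4 * real n / min 1 (t / \<gamma>) + 1) ^ n \<le> 2 ^ m"
    and ent: "2 * t < entropy_number K m"
  shows "t \<le> (SUP f\<in>K. INF y\<in>unit_ball k N. norm (f - \<Phi> y))"
proof (rule ccontr)
  assume "\<not> ?thesis"
  then have lt: "(SUP f\<in>K. INF y\<in>unit_ball k N. norm (f - \<Phi> y)) < t" by simp
  define r where "r = min 1 (t / \<gamma>)"
  have r: "0 < r" using t g by (simp add: r_def)
  have r\<gamma>: "\<gamma> * r \<le> t" using g by (simp add: r_def min_def field_simps)
  obtain P where Pf: "finite P" and PB: "P \<subseteq> unit_ball k N"
    and Pc: "real (card P) \<le> (4 * real k / r + 1) ^ k"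
    and Pcov: "\<forall>y\<in>unit_ball k N. \<exists>p\<in>P. N (\<lambda>i. y i - p i) \<le> r"
    using ball_cover[OF N k1 r] by blast
  have zero: "(\<lambda>_. 0) \<in> unit_ball k N" using N_zero[OF N] Rk_zero by (simp add: unit_ball_def)
  obtain Bd where Bd: "\<And>f. f \<in> K \<Longrightarrow> norm f \<le> Bd" using Kb bounded_iff by blast
  have bb: "bdd_below ((\<lambda>y. norm (f - \<Phi> y)) ` unit_ball k N)" for f
    by (rule bdd_belowI2[where m = 0]) simp
  have inf_le: "(INF y\<in>unit_ball k N. norm (f - \<Phi> y)) \<le> norm (f - \<Phi> (\<lambda>_. 0))" for f
    by (rule cINF_lower[OF bb zero])
  have ba: "bdd_above ((\<lambda>f. INF y\<in>unit_ball k N. norm (f - \<Phi> y)) ` K)"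
  proof (rule bdd_aboveI2[where M = "Bd + norm (\<Phi> (\<lambda>_. 0))"])
    fix f assume "f \<in> K"
    then show "(INF y\<in>unit_ball k N. norm (f - \<Phi> y)) \<le> Bd + norm (\<Phi> (\<lambda>_. 0))"
      using inf_le[of f] Bd[of f] norm_triangle_ineq4[of f "\<Phi> (\<lambda>_. 0)"] by linarith
  qed
  have cov: "K \<subseteq> (\<Union>c\<in>\<Phi> ` P. cball c (2 * t))"
  proof
    fix f assume fK: "f \<in> K"
    have "(INF y\<in>unit_ball k N. norm (f - \<Phi> y)) \<le> (SUP f\<in>K. INF y\<in>unit_ball k N. norm (f - \<Phi> y))"
      by (rule cSUP_upper[OF fK ba])
    with lt have "(INF y\<in>unit_ball k N. norm (f - \<Phi> y)) < t" by linarith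
    then obtain y where yB: "y \<in> unit_ball k N" and fy: "norm (f - \<Phi> y) < t"
      using cINF_less_iff[OF _ bb] zero by blast
    obtain p where pP: "p \<in> P" and yp: "N (\<lambda>i. y i - p i) \<le> r" using Pcov yB by blast
    have "norm (\<Phi> y - \<Phi> p) \<le> \<gamma> * N (\<lambda>i. y i - p i)"
      using Phi yB pP PB unfolding lip_map_def by blast
    also have "\<dots> \<le> \<gamma> * r" using yp g by simp
    finally have "norm (\<Phi> y - \<Phi> p) \<le> t" using r\<gamma> by linarith
    then have "norm (f - \<Phi> p) \<le> 2 * t"
      using fy norm_triangle_ineq[of "f - \<Phi> y" "\<Phi> y - \<Phi> p"] by simp
    then have "f \<in> cball (\<Phi> p) (2 * t)" by (simp add: dist_norm norm_minus_commute)
    then show "f \<in> (\<Union>c\<in>\<Phi> ` P. cball c (2 * t))" using pP by blast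
  qed
  have "(4 * real k / r + 1) ^ k \<le> (4 * real n / r + 1) ^ k"
    by (rule power_mono) (use kn r in \<open>auto intro!: divide_right_mono\<close>)
  also have "\<dots> \<le> (4 * real n / r + 1) ^ n"
    by (rule power_increasing[OF kn]) (use r in simp)
  also have "\<dots> \<le> 2 ^ m" using m r_def by simp
  finally have "real (card P) \<le> 2 ^ m" using Pc by linarith
  then have cP: "card P \<le> 2 ^ m" by (metis of_nat_le_iff of_nat_numeral of_nat_power)
  have "card (\<Phi> ` P) \<le> 2 ^ m" using card_image_le[OF Pf, of \<Phi>] cP by linarith
  then have "entropy_number K m \<le> 2 * t"
    by (intro entropy_le[OF _ _ cov]) (use Pf t in auto)
  with ent show False by linarith
qed

lemma norm1: "is_norm_on 1 (\<lambda>y. \<bar>y 0\<bar>)"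
proof -
  have "y = (\<lambda>_. 0)" if "y \<in> Rk 1" "y 0 = 0" for y :: "nat \<Rightarrow> real"
  proof
    fix i show "y i = 0" using that by (cases i) (auto simp: Rk_def)
  qed
  then show ?thesis unfolding is_norm_on_def by (auto simp: abs_mult)
qed

lemma lw_lower:
  fixes K :: "'a::real_normed_vector set"
  assumes n: "1 \<le> n" and g: "\<gamma> > 0" and Kb: "bounded K" and t: "t > 0"
    and m: "(4 * real n / min 1 (t / \<gamma>) + 1) ^ n \<le> 2 ^ m"
    and ent: "2 * t < entropy_number K m"
  shows "t \<le> lipschitz_width K \<gamma> n"
  unfolding lipschitz_width_def
proof (rule cInf_greatest)
  show "{lip_dist K \<gamma> k N |k N. 1 \<le> k \<and> k \<le> n \<and> is_norm_on k N} \<noteq> {}"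
    using n norm1 by blast
  fix x assume "x \<in> {lip_dist K \<gamma> k N |k N. 1 \<le> k \<and> k \<le> n \<and> is_norm_on k N}"
  then obtain k N where x: "x = lip_dist K \<gamma> k N" and k1: "1 \<le> k" and kn: "k \<le> n"
    and N: "is_norm_on k N" by blast
  have "lip_map \<gamma> k N (\<lambda>_. 0)"
    unfolding lip_map_def using N_nonneg[OF N Rk_diff] g by (auto simp: unit_ball_def)
  then have ne: "{(SUP f\<in>K. INF y\<in>unit_ball k N. norm (f - \<Phi> y)) | \<Phi>. lip_map \<gamma> k N \<Phi>} \<noteq> {}"
    by blast
  show "t \<le> x" unfolding x lip_dist_def
    by (rule cInf_greatest[OF ne]) (use sup_lower[OF N k1 kn g Kb t _ m ent] in blast)
qed

lemma ln2_ge: "1/2 \<le> ln (2::real)"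
proof -
  have "exp (1/2::real) \<le> 2"
  proof (rule ccontr)
    assume "\<not> ?thesis"
    then have "2 * 2 < exp (1/2::real) * exp (1/2)"
      by (intro mult_strict_mono) auto
    also have "\<dots> = exp 1" by (simp flip: exp_add)
    finally show False using exp_le by simp
  qed
  then show ?thesis by (subst ln_ge_iff) auto
qed

lemma log2_le2: "0 < x \<Longrightarrow> log 2 x \<le> 2 * (x::real)"
proof -
  assume x: "0 < x"
  have l2: "0 < ln (2::real)" using ln2_ge by linarith
  show ?thesis
  proof (cases "ln x \<le> 0")
    case True
    then have "log 2 x \<le> 0" unfolding log_def using l2 by (simp add: divide_nonpos_pos)
    then show ?thesis using x by linarith
  next
    case False
    have "log 2 x = ln x / ln 2" by (simp add: log_def)
    also have "\<dots> \<le> ln x / (1/2)" using False ln2_ge by (intro divide_left_mono) auto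
    also have "\<dots> \<le> 2 * x" using ln_le_minus_one[OF x] by simp
    finally show ?thesis .
  qed
qed

lemma main_bound:
  fixes K :: "'a::real_normed_vector set" and n :: nat
  assumes n2: "2 \<le> n" and lam: "lam > 1" and C': "C' > 0" and eta: "\<eta> > 0" and e: "e \<ge> 0"
    and b: "b > 0" and bl: "real n powr (-e) \<le> b" and Kb: "bounded K"
    and Qdef: "Q = log 2 (5 + 4 * C' / \<eta>) + 2 * (1 + \<bar>\<delta>\<bar> + e) + log 2 lam"
    and hyp: "\<And>m. n \<le> m \<Longrightarrow> real m \<le> (Q + 1) * real n ^ 2 \<Longrightarrow> 2 * \<eta> * b < entropy_number K m"
  shows "\<eta> * b \<le> lipschitz_width K (C' * real n powr \<delta> * lam ^ n) n"
proof -
  define \<gamma> where "\<gamma> = C' * real n powr \<delta> * lam ^ n"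
  have npos: "0 < real n" using n2 by simp
  have n1: "1 \<le> real n" using n2 by simp
  have lamn: "1 \<le> lam ^ n" using lam by simp
  have g: "\<gamma> > 0" unfolding \<gamma>_def using C' lam npos by simp
  define t where "t = \<eta> * b"
  have t: "t > 0" unfolding t_def using eta b by simp
  define r where "r = min 1 (t / \<gamma>)"
  have r: "0 < r" "r \<le> 1" using t g by (auto simp: r_def)
  define R where "R = 4 * real n / r + 1"
  have R4: "4 * real n + 1 \<le> R" unfolding R_def using r npos
    by (simp add: le_divide_eq)
  have Rpos: "0 < R" using R4 npos by linarith
  define m where "m = nat \<lceil>real n * log 2 R\<rceil>"
  have lR1: "1 \<le> log 2 R" using R4 n1 by (subst le_log_iff) auto
  have nlR: "real n \<le> real n * log 2 R" using lR1 npos by simp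
  have m_ge: "real n * log 2 R \<le> real m" unfolding m_def using nlR npos by linarith
  have m_le: "real m \<le> real n * log 2 R + 1" unfolding m_def using nlR npos by linarith
  have mn: "n \<le> m" using m_ge nlR by linarith
  have pow: "R ^ n \<le> 2 ^ m"
  proof -
    have "R ^ n = R powr real n" using Rpos by (simp add: powr_realpow)
    also have "\<dots> = (2 powr log 2 R) powr real n" using Rpos by simp
    also have "\<dots> = 2 powr (real n * log 2 R)" by (simp add: powr_powr mult.commute)
    also have "\<dots> \<le> 2 powr real m" by (rule powr_mono[OF m_ge]) simp
    also have "\<dots> = 2 ^ m" by (simp add: powr_realpow)
    finally show ?thesis .
  qed
  define E where "E = 1 + \<bar>\<delta>\<bar> + e"
  have E1: "1 \<le> E" unfolding E_def using e by simp
  define P where "P = real n powr E * lam ^ n"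
  have nP: "real n \<le> P"
  proof -
    have "real n = real n powr 1" using npos by simp
    also have "\<dots> \<le> real n powr E" by (rule powr_mono[OF E1 n1])
    also have "\<dots> \<le> P" unfolding P_def using lamn by (simp add: mult_le_cancel_left1)
    finally show ?thesis .
  qed
  have Ppos: "0 < P" using nP npos by linarith
  have invr: "1 / r \<le> 1 + \<gamma> / t"
    unfolding r_def using t g by (cases "1 \<le> t / \<gamma>") (auto simp: min_def)
  have ginv: "\<gamma> / t \<le> (C' / \<eta>) * real n powr (\<bar>\<delta>\<bar> + e) * lam ^ n"
  proof -
    have ib: "1 / b \<le> real n powr e"
    proof -
      have "1 / b \<le> 1 / real n powr (-e)" using bl b npos by (intro divide_left_mono) auto
      then show ?thesis by (simp add: powr_minus_divide)
    qed
    have nd: "real n powr \<delta> \<le> real n powr \<bar>\<delta>\<bar>" by (rule powr_mono[OF _ n1]) simp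
    have "\<gamma> / t = (C' / \<eta>) * real n powr \<delta> * lam ^ n * (1 / b)"
      unfolding \<gamma>_def t_def by (simp add: field_simps)
    also have "\<dots> \<le> (C' / \<eta>) * real n powr \<bar>\<delta>\<bar> * lam ^ n * real n powr e"
      using C' eta lam nd ib b by (intro mult_mono) auto
    also have "\<dots> = (C' / \<eta>) * real n powr (\<bar>\<delta>\<bar> + e) * lam ^ n"
      by (simp add: powr_add)
    finally show ?thesis .
  qed
  have RP: "R \<le> (5 + 4 * C' / \<eta>) * P"
  proof -
    have "R = 4 * real n * (1 / r) + 1" unfolding R_def by (simp add: divide_inverse)
    also have "\<dots> \<le> 4 * real n * (1 + \<gamma> / t) + 1"
      using mult_left_mono[OF invr, of "4 * real n"] npos by simp
    also have "\<dots> = 4 * real n + 4 * real n * (\<gamma> / t) + 1" by (simp add: algebra_simps)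
    also have "\<dots> \<le> 4 * real n + 4 * real n * ((C' / \<eta>) * real n powr (\<bar>\<delta>\<bar> + e) * lam ^ n) + 1"
      using mult_left_mono[OF ginv, of "4 * real n"] npos by linarith
    also have "4 * real n * ((C' / \<eta>) * real n powr (\<bar>\<delta>\<bar> + e) * lam ^ n) = (4 * C' / \<eta>) * P"
      unfolding P_def E_def using npos by (simp add: powr_add field_simps)
    also have "4 * real n + (4 * C' / \<eta>) * P + 1 \<le> 5 * P + (4 * C' / \<eta>) * P"
      using nP n1 by linarith
    also have "\<dots> = (5 + 4 * C' / \<eta>) * P" by (simp add: algebra_simps)
    finally show ?thesis .
  qed
  have A5: "1 \<le> 5 + 4 * C' / \<eta>" using C' eta by simp
  have lA: "0 \<le> log 2 (5 + 4 * C' / \<eta>)" using A5 by simp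
  have llam: "0 \<le> log 2 lam" using lam by simp
  have ln2n: "log 2 (real n) \<le> 2 * real n" by (rule log2_le2[OF npos])
  have "log 2 R \<le> log 2 ((5 + 4 * C' / \<eta>) * P)"
    using RP Rpos by (subst log_le_cancel_iff) auto
  also have "\<dots> = log 2 (5 + 4 * C' / \<eta>) + E * log 2 (real n) + real n * log 2 lam"
    unfolding P_def using A5 npos lam
    by (simp add: log_mult log_powr log_nat_power)
  also have "\<dots> \<le> real n * log 2 (5 + 4 * C' / \<eta>) + E * (2 * real n) + real n * log 2 lam"
    using lA n1 E1 ln2n by (intro add_mono mult_left_mono) (auto intro: mult_le_cancel_right1[THEN iffD2])
  also have "\<dots> = real n * Q" unfolding Qdef E_def by (simp add: algebra_simps)
  finally have lRQ: "log 2 R \<le> real n * Q" .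
  have "real m \<le> real n * (real n * Q) + 1" using m_le lRQ npos
    by (meson add_le_cancel_right mult_left_mono less_imp_le order_trans)
  also have "\<dots> \<le> (Q + 1) * real n ^ 2"
  proof -
    have "1 \<le> real n * real n" using mult_mono[OF n1 n1] by simp
    then show ?thesis by (simp add: power2_eq_square algebra_simps)
  qed
  finally have mQ: "real m \<le> (Q + 1) * real n ^ 2" .
  have ent: "2 * t < entropy_number K m" using hyp[OF mn mQ] unfolding t_def by simp
  have m': "(4 * real n / min 1 (t / \<gamma>) + 1) ^ n \<le> 2 ^ m" using pow unfolding R_def r_def .
  have "t \<le> lipschitz_width K \<gamma> n"
    by (rule lw_lower[OF _ g Kb t m' ent]) (use n2 in simp)
  then show ?thesis unfolding t_def \<gamma>_def .
qed

lemma eta_exists: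
  assumes c1: "c1 > 0" and a: "a \<ge> 0" and p: "p \<ge> 0" and A: "A > 0" and E: "E \<ge> 0"
  shows "\<exists>\<eta>>0. 2 * \<eta> * (log 2 (5 + A / \<eta>) + E + 1) powr a
                  * (log 2 (log 2 (5 + A / \<eta>) + E + 1) + 2) powr p \<le> c1"
proof -
  define K where "K = nat \<lceil>a + p\<rceil>"
  define Cst where "Cst = 2 * 3 powr p * A * 3 ^ K"
  have Cst: "Cst > 0" unfolding Cst_def using A by simp
  have "((\<lambda>x::real. x ^ K / exp x) \<longlongrightarrow> 0) at_top" by (rule tendsto_power_div_exp_0)
  then have ev1: "eventually (\<lambda>x::real. x ^ K / exp x < c1 / Cst) at_top"
    using c1 Cst by (intro order_tendstoD(2)) auto
  have ev2: "eventually (\<lambda>x::real. E + 4 \<le> x) at_top" by (rule eventually_ge_at_top)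
  obtain x where x1: "x ^ K / exp x < c1 / Cst" and x2: "E + 4 \<le> x"
    using eventually_happens'[OF _ eventually_conj[OF ev1 ev2]] by auto
  have x0: "0 \<le> x" using x2 E by linarith
  define \<eta> where "\<eta> = A / exp x"
  have eta: "\<eta> > 0" unfolding \<eta>_def using A by simp
  have Aeta: "A / \<eta> = exp x" unfolding \<eta>_def using A by simp
  define Y where "Y = log 2 (5 + A / \<eta>) + E + 1"
  define X where "X = 2 * x + E + 4"
  have l0: "0 \<le> log 2 (5 + A / \<eta>)" unfolding Aeta
  proof -
    have "0 < 5 + exp x" "1 \<le> 5 + exp x" using exp_gt_zero[of x] by linarith+
    then show "0 \<le> log 2 (5 + exp x)" using zero_le_log_cancel_iff[of 2 "5 + exp x"] by linarith
  qed
  have Y1: "1 \<le> Y" unfolding Y_def using l0 E by linarith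
  have lexp: "log 2 (exp x) \<le> 2 * x"
  proof -
    have "log 2 (exp x) = x / ln 2" by (simp add: log_def)
    also have "\<dots> \<le> x / (1/2)" using ln2_ge x0 by (intro divide_left_mono) auto
    finally show ?thesis by simp
  qed
  have "log 2 (5 + A / \<eta>) \<le> log 2 (8 * exp x)"
  proof -
    have e1: "1 \<le> exp x" using x0 by simp
    then have "0 < 5 + exp x" "0 < 8 * exp x" "5 + exp x \<le> 8 * exp x" by linarith+
    then show ?thesis unfolding Aeta using log_le_cancel_iff[of 2 "5 + exp x" "8 * exp x"] by simp
  qed
  also have "\<dots> = 3 + log 2 (exp x)"
  proof -
    have "log 2 ((2::real) ^ 3) = 3" by (subst log_nat_power) auto
    then have "log 2 (8::real) = 3" by simp
    then show ?thesis by (simp add: log_mult)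
  qed
  finally have "log 2 (5 + A / \<eta>) \<le> 3 + 2 * x" using lexp by linarith
  then have YX: "Y \<le> X" unfolding Y_def X_def by linarith
  have X1: "4 \<le> X" unfolding X_def using x0 E by linarith
  have X3: "X \<le> 3 * x" unfolding X_def using x2 by linarith
  have W: "log 2 Y + 2 \<le> 3 * X" using log2_le2[of Y] Y1 YX X1 by linarith
  have W0: "0 \<le> log 2 Y + 2" using Y1 by simp
  have "2 * \<eta> * Y powr a * (log 2 Y + 2) powr p \<le> 2 * \<eta> * X powr a * (3 * X) powr p"
    using eta Y1 YX W W0 a p by (intro mult_mono powr_mono2) auto
  also have "\<dots> = 2 * 3 powr p * \<eta> * X powr (a + p)"
    using X1 by (simp add: powr_mult powr_add)
  also have "\<dots> \<le> 2 * 3 powr p * \<eta> * X ^ K"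
  proof -
    have "a + p \<le> real K" unfolding K_def using a p by linarith
    then have "X powr (a + p) \<le> X powr real K" using X1 by (intro powr_mono) auto
    also have "\<dots> = X ^ K" using X1 by (simp add: powr_realpow)
    finally show ?thesis using eta by simp
  qed
  also have "\<dots> \<le> 2 * 3 powr p * \<eta> * (3 * x) ^ K"
    using X1 X3 eta by (intro mult_left_mono power_mono) auto
  also have "\<dots> = Cst * (x ^ K / exp x)"
    unfolding Cst_def \<eta>_def by (simp add: power_mult_distrib field_simps)
  also have "\<dots> \<le> c1" using x1 Cst by (simp add: field_simps)
  finally show ?thesis using eta unfolding Y_def by blast
qed

lemma log2_nat_le: "1 \<le> n \<Longrightarrow> log 2 (real n) \<le> real n"
proof -
  assume n: "1 \<le> n"
  have "real n \<le> 2 ^ n" using less_exp[of n] by (metis less_imp_le of_nat_le_iff of_nat_numeral of_nat_power)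
  then have "log 2 (real n) \<le> log 2 (2 ^ n)" using n by (subst log_le_cancel_iff) auto
  also have "\<dots> = real n" by (subst log_nat_power) auto
  finally show ?thesis .
qed

lemma log_facts:
  assumes n2: "2 \<le> n" and mn: "n \<le> m" and mQ: "real m \<le> (Q + 1) * real n ^ 2" and Q: "0 \<le> Q"
  shows "1 \<le> log 2 (real n)" "log 2 (real n) \<le> log 2 (real m)"
    "log 2 (real m) \<le> (log 2 (Q + 1) + 2) * log 2 (real n)"
    "0 \<le> log 2 (Q + 1)"
proof -
  have np: "0 < real n" using n2 by simp
  show L1: "1 \<le> log 2 (real n)" using n2 by (subst le_log_iff) auto
  show "log 2 (real n) \<le> log 2 (real m)" using mn np by (subst log_le_cancel_iff) auto
  show lQ: "0 \<le> log 2 (Q + 1)" using Q by simp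
  have "log 2 (real m) \<le> log 2 ((Q + 1) * real n ^ 2)" using mQ np mn Q by (subst log_le_cancel_iff) auto
  also have "\<dots> = log 2 (Q + 1) + 2 * log 2 (real n)" using Q np by (simp add: log_mult log_nat_power)
  also have "\<dots> \<le> (log 2 (Q + 1) + 2) * log 2 (real n)"
    using mult_left_mono[OF L1 lQ] by (simp add: algebra_simps)
  finally show "log 2 (real m) \<le> (log 2 (Q + 1) + 2) * log 2 (real n)" .
qed

lemma partI:
  fixes K :: "'a::real_normed_vector set" and \<alpha> \<beta> c1 lam C' \<delta> :: real
  assumes Kb: "bounded K" and lam: "lam > 1" and C': "C' > 0" and c1: "c1 > 0" and \<alpha>: "\<alpha> > 0"
    and H: "\<forall>n::nat\<ge>2. entropy_number K n > c1 * (log 2 (real n)) powr \<beta> / real n powr \<alpha>"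
  shows "\<exists>C>0. \<forall>n::nat\<ge>2. lipschitz_width K (C' * real n powr \<delta> * lam ^ n) n \<ge>
            C * (log 2 (real n)) powr \<beta> / real n powr (2 * \<alpha>)"
proof -
  define e where "e = 2 * \<alpha> + \<bar>\<beta>\<bar>"
  have e: "0 \<le> e" unfolding e_def using \<alpha> by simp
  define EQ where "EQ = 2 * (1 + \<bar>\<delta>\<bar> + e) + log 2 lam"
  have EQ: "0 \<le> EQ" unfolding EQ_def using e lam by simp
  obtain \<eta> where eta: "\<eta> > 0" and etac: "2 * \<eta> * (log 2 (5 + 4 * C' / \<eta>) + EQ + 1) powr \<alpha>
      * (log 2 (log 2 (5 + 4 * C' / \<eta>) + EQ + 1) + 2) powr \<bar>\<beta>\<bar> \<le> c1"
    using eta_exists[OF c1 _ _ _ EQ, of \<alpha> "\<bar>\<beta>\<bar>" "4 * C'"] \<alpha> C' by auto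
  define Q where "Q = log 2 (5 + 4 * C' / \<eta>) + 2 * (1 + \<bar>\<delta>\<bar> + e) + log 2 lam"
  have Q1: "Q + 1 = log 2 (5 + 4 * C' / \<eta>) + EQ + 1" unfolding Q_def EQ_def by simp
  have A5: "1 \<le> 5 + 4 * C' / \<eta>" using C' eta by simp
  have Q0: "0 \<le> Q" unfolding Q_def using A5 e lam by simp
  define W where "W = log 2 (Q + 1) + 2"
  have W1: "1 \<le> W" unfolding W_def using Q0 by simp
  define G where "G = (Q + 1) powr \<alpha> * W powr \<bar>\<beta>\<bar>"
  have G: "0 < G" unfolding G_def using Q0 W1 by simp
  have etaG: "2 * \<eta> * G \<le> c1" using etac unfolding G_def W_def Q1 by (simp add: mult.assoc)
  show ?thesis
  proof (intro exI[of _ \<eta>] conjI allI impI eta)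
    fix n :: nat assume n2: "2 \<le> n"
    have np: "0 < real n" using n2 by simp
    have n1: "1 \<le> real n" using n2 by simp
    define L where "L = log 2 (real n)"
    have L1: "1 \<le> L" unfolding L_def using n2 by (subst le_log_iff) auto
    have Ln: "L \<le> real n" unfolding L_def using log2_nat_le n2 by simp
    define b where "b = L powr \<beta> / real n powr (2 * \<alpha>)"
    have b: "0 < b" unfolding b_def using L1 np by simp
    have Lb: "real n powr (- \<bar>\<beta>\<bar>) \<le> L powr \<beta>"
    proof (cases "0 \<le> \<beta>")
      case True
      have "real n powr (- \<bar>\<beta>\<bar>) \<le> 1" using powr_mono[of "- \<bar>\<beta>\<bar>" 0 "real n"] n1 by simp
      also have "1 \<le> L powr \<beta>" using L1 True by (simp add: ge_one_powr_ge_zero)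
      finally show ?thesis .
    next
      case False
      then have "real n powr \<beta> \<le> L powr \<beta>" using L1 Ln by (intro powr_mono2') auto
      then show ?thesis using False by simp
    qed
    have bl: "real n powr (-e) \<le> b"
    proof -
      have "real n powr (-e) = real n powr (- \<bar>\<beta>\<bar>) / real n powr (2 * \<alpha>)"
        unfolding e_def by (simp add: powr_diff[symmetric] algebra_simps)
      also have "\<dots> \<le> b" unfolding b_def using Lb np by (intro divide_right_mono) auto
      finally show ?thesis .
    qed
    have hyp: "2 * \<eta> * b < entropy_number K m"
      if mn: "n \<le> m" and mQ: "real m \<le> (Q + 1) * real n ^ 2" for m
    proof -
      note lf = log_facts[OF n2 mn mQ Q0]
      define Lm where "Lm = log 2 (real m)"
      have m2: "2 \<le> m" using mn n2 by simp
      have mp: "0 < real m" using m2 by simp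
      have LmL: "L \<le> Lm" "Lm \<le> W * L" using lf unfolding L_def Lm_def W_def by auto
      have LmB: "W powr (- \<bar>\<beta>\<bar>) * L powr \<beta> \<le> Lm powr \<beta>"
      proof (cases "0 \<le> \<beta>")
        case True
        have "W powr (- \<bar>\<beta>\<bar>) * L powr \<beta> \<le> 1 * L powr \<beta>"
          using W1 L1 powr_mono[of "- \<bar>\<beta>\<bar>" 0 W] by (intro mult_right_mono) auto
        also have "\<dots> \<le> Lm powr \<beta>" using L1 LmL True by (simp add: powr_mono2)
        finally show ?thesis .
      next
        case False
        have "W powr (- \<bar>\<beta>\<bar>) * L powr \<beta> = (W * L) powr \<beta>"
          using False W1 L1 by (simp add: powr_mult)
        also have "\<dots> \<le> Lm powr \<beta>" using False L1 LmL by (intro powr_mono2') auto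
        finally show ?thesis .
      qed
      have mA: "real m powr \<alpha> \<le> (Q + 1) powr \<alpha> * real n powr (2 * \<alpha>)"
      proof -
        have "real m powr \<alpha> \<le> ((Q + 1) * real n ^ 2) powr \<alpha>" using mQ \<alpha> by (intro powr_mono2) auto
        also have "\<dots> = (Q + 1) powr \<alpha> * (real n ^ 2) powr \<alpha>" using Q0 by (simp add: powr_mult)
        also have "(real n ^ 2) powr \<alpha> = real n powr (2 * \<alpha>)"
        proof -
          have eq: "real n ^ 2 = real n powr 2" using np by (simp add: powr_numeral)
          show ?thesis by (subst eq) (rule powr_powr)
        qed
        finally show ?thesis .
      qed
      have "2 * \<eta> * b \<le> (c1 / G) * b" using etaG G b by (simp add: field_simps)
      also have "(c1 / G) * b = c1 * (W powr (- \<bar>\<beta>\<bar>) * L powr \<beta>) / ((Q + 1) powr \<alpha> * real n powr (2 * \<alpha>))"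
        unfolding G_def b_def using W1 Q0 by (simp add: powr_minus field_simps)
      also have "\<dots> \<le> c1 * Lm powr \<beta> / real m powr \<alpha>"
        using LmB mA c1 mp Q0 W1 np
        by (intro frac_le mult_left_mono) auto
      also have "\<dots> < entropy_number K m" using H m2 unfolding Lm_def by auto
      finally show ?thesis .
    qed
    have "\<eta> * b \<le> lipschitz_width K (C' * real n powr \<delta> * lam ^ n) n"
      by (rule main_bound[OF n2 lam C' eta e b bl Kb Q_def hyp])
    then show "\<eta> * log 2 (real n) powr \<beta> / real n powr (2 * \<alpha>) \<le> lipschitz_width K (C' * real n powr \<delta> * lam ^ n) n"
      unfolding b_def L_def by simp
  qed
qed

lemma partII:
  fixes K :: "'a::real_normed_vector set" and \<alpha> c1 lam C' \<delta> :: real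
  assumes Kb: "bounded K" and lam: "lam > 1" and C': "C' > 0" and c1: "c1 > 0" and \<alpha>: "\<alpha> > 0"
    and H: "\<forall>n::nat\<ge>2. entropy_number K n > c1 * (log 2 (real n)) powr (- \<alpha>)"
  shows "\<exists>C>0. \<forall>n::nat\<ge>2. lipschitz_width K (C' * real n powr \<delta> * lam ^ n) n \<ge>
            C * (log 2 (real n)) powr (- \<alpha>)"
proof -
  define e where "e = \<alpha>"
  have e: "0 \<le> e" unfolding e_def using \<alpha> by simp
  define EQ where "EQ = 2 * (1 + \<bar>\<delta>\<bar> + e) + log 2 lam"
  have EQ: "0 \<le> EQ" unfolding EQ_def using e lam by simp
  obtain \<eta> where eta: "\<eta> > 0" and etac: "2 * \<eta> * (log 2 (5 + 4 * C' / \<eta>) + EQ + 1) powr 0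
      * (log 2 (log 2 (5 + 4 * C' / \<eta>) + EQ + 1) + 2) powr \<alpha> \<le> c1"
    using eta_exists[OF c1 _ _ _ EQ, of 0 \<alpha> "4 * C'"] \<alpha> C' by auto
  define Q where "Q = log 2 (5 + 4 * C' / \<eta>) + 2 * (1 + \<bar>\<delta>\<bar> + e) + log 2 lam"
  have Q1: "Q + 1 = log 2 (5 + 4 * C' / \<eta>) + EQ + 1" unfolding Q_def EQ_def by simp
  have A5: "1 \<le> 5 + 4 * C' / \<eta>" using C' eta by simp
  have Q0: "0 \<le> Q" unfolding Q_def using A5 e lam by simp
  define W where "W = log 2 (Q + 1) + 2"
  have W1: "1 \<le> W" unfolding W_def using Q0 by simp
  define G where "G = W powr \<alpha>"
  have G: "0 < G" unfolding G_def using W1 by simp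
  have "(Q + 1) powr 0 = 1" using Q0 by simp
  then have etaG: "2 * \<eta> * G \<le> c1" using etac unfolding G_def W_def Q1 by simp
  show ?thesis
  proof (intro exI[of _ \<eta>] conjI allI impI eta)
    fix n :: nat assume n2: "2 \<le> n"
    have np: "0 < real n" using n2 by simp
    define L where "L = log 2 (real n)"
    have L1: "1 \<le> L" unfolding L_def using n2 by (subst le_log_iff) auto
    have Ln: "L \<le> real n" unfolding L_def using log2_nat_le n2 by simp
    define b where "b = L powr (- \<alpha>)"
    have b: "0 < b" unfolding b_def using L1 by simp
    have bl: "real n powr (-e) \<le> b" unfolding b_def e_def using L1 Ln \<alpha> by (intro powr_mono2') auto
    have hyp: "2 * \<eta> * b < entropy_number K m"
      if mn: "n \<le> m" and mQ: "real m \<le> (Q + 1) * real n ^ 2" for m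
    proof -
      note lf = log_facts[OF n2 mn mQ Q0]
      define Lm where "Lm = log 2 (real m)"
      have m2: "2 \<le> m" using mn n2 by simp
      have LmL: "L \<le> Lm" "Lm \<le> W * L" using lf unfolding L_def Lm_def W_def by auto
      have "2 * \<eta> * b \<le> (c1 / G) * b" using etaG G b by (simp add: field_simps)
      also have "(c1 / G) * b = c1 * (W * L) powr (- \<alpha>)"
        unfolding G_def b_def using W1 L1 by (simp add: powr_minus powr_mult field_simps)
      also have "\<dots> \<le> c1 * Lm powr (- \<alpha>)"
        using LmL L1 W1 c1 \<alpha> by (intro mult_left_mono powr_mono2') auto
      also have "\<dots> < entropy_number K m" using H m2 unfolding Lm_def by auto
      finally show ?thesis .
    qed
    have "\<eta> * b \<le> lipschitz_width K (C' * real n powr \<delta> * lam ^ n) n"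
      by (rule main_bound[OF n2 lam C' eta e b bl Kb Q_def hyp])
    then show "\<eta> * log 2 (real n) powr (- \<alpha>) \<le> lipschitz_width K (C' * real n powr \<delta> * lam ^ n) n"
      unfolding b_def L_def by simp
  qed
qed

theorem theorem7p3:
  fixes K :: "'a::banach set" and \<delta> lam C' :: real
  assumes "compact K" and "lam > 1" and "C' > 0"
  defines "\<gamma> \<equiv> (\<lambda>n::nat. C' * real n powr \<delta> * lam ^ n)"
  shows
    "(\<forall>c1 \<alpha> \<beta>::real. c1 > 0 \<and> \<alpha> > 0 \<and>
        (\<forall>n::nat\<ge>2. entropy_number K n > c1 * (log 2 (real n)) powr \<beta> / real n powr \<alpha>) \<longrightarrow>
        (\<exists>C>0. \<forall>n::nat\<ge>2. lipschitz_width K (\<gamma> n) n \<ge> C * (log 2 (real n)) powr \<beta> / real n powr (2 * \<alpha>)))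
     \<and>
     (\<forall>c1 \<alpha>::real. c1 > 0 \<and> \<alpha> > 0 \<and>
        (\<forall>n::nat\<ge>2. entropy_number K n > c1 * (log 2 (real n)) powr (- \<alpha>)) \<longrightarrow>
        (\<exists>C>0. \<forall>n::nat\<ge>2. lipschitz_width K (\<gamma> n) n \<ge> C * (log 2 (real n)) powr (- \<alpha>)))"
proof -
  have Kb: "bounded K" using assms(1) by (rule compact_imp_bounded)
  show ?thesis unfolding \<gamma>_def
    using partI[OF Kb assms(2,3)] partII[OF Kb assms(2,3)] by blast
qed

end
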